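(* For any integers $k,l\geq 1$, the equation $$[[x_{k+1},\dots,x_{k+l}],[x_1,\dots,x_k]]=\beta_{k+l}({\sf Sum}(\Phi_{k,l}C_{l,k}))$$ holds in $\mathbb Z\langle x_1,\dots,x_{k+l}\rangle$, where $\Phi_{k,l}C_{l,k}=\{\Phi_{k,l}\circ\tau\mid\tau\in C_{l,k}\}$.
   Context: $\mathbb Z\langle x_1,\dots,x_m\rangle$ is the free associative ring on $x_1,\dots,x_m$, with bracket $[u,v]=uv-vu$ and left-normed brackets $[u_1,\dots,u_r]=[[u_1,\dots,u_{r-1}],u_r]$. $S_m$ is the symmetric group on $\{1,\dots,m\}$. $\gamma_m$ is the additive subgroup spanned by the monomials $x_{\sigma(1)}\cdots x_{\sigma(m)}$, $\sigma\in S_m$; $\beta_m:\gamma_m\to\gamma_m$ is the homomorphism with $\beta_m(x_{\sigma(1)}\cdots x_{\sigma(m)})=[x_{\sigma(1)},\dots,x_{\sigma(m)}]$; for $T\subseteq S_m$, ${\sf Sum}(T)=\sum_{\sigma\in T}x_{\sigma(1)}\cdots x_{\sigma(m)}$. An $(s,t)$-shuffle is a pair $(\alpha,\beta)$ of strictly increasing maps $\alpha:\{1,\dots,s\}\to\{1,\dots,s+t\}$, $\beta:\{1,\dots,t\}\to\{1,\dots,s+t\}$ with disjoint images; ${\sf Sh}^1(s,t)$ is the set of those with $\alpha(1)=1$. For $p,q\geq1$, $0\leq i\leq q-1$ and $(\alpha,\beta)\in{\sf Sh}^1(q-i,i)$, let $\tilde\sigma_{\alpha,\beta,p,q}\in S_{p+q}$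 be given by $\tilde\sigma(j)=j$ for $1\leq j\leq p$, $\tilde\sigma(p+j)=p+\beta(i+1-j)$ for $1\leq j\leq i$, $\tilde\sigma(p+i+j)=p+\alpha(j)$ for $1\leq j\leq q-i$; let $\sigma_{\alpha,\beta,p,q}=\tilde\sigma_{\alpha,\beta,p,q}\circ(1,2)^i$. Set $C_{p,q}=\{\sigma_{\alpha,\beta,p,q}\mid 0\leq i\leq q-1,\ (\alpha,\beta)\in{\sf Sh}^1(q-i,i)\}\subseteq S_{p+q}$. Finally $\Phi_{k,l}\in S_{k+l}$ is defined by $\Phi_{k,l}(i)=i+k$ if $i\leq l$ and $\Phi_{k,l}(i)=i-l$ if $i>l$. *)

theory Defs
  imports "HOL-Combinatorics.Combinatorics" "HOL-Library.FuncSet"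
begin

text \<open>Elements of the free associative ring Z<x_1,x_2,...> are represented by their
  coefficient functions on words (lists of variable indices).  Only finitely supported
  elements arise below; equality is equality of coefficient functions.\<close>
type_synonym ncpoly = "nat list \<Rightarrow> int"

definition var :: "nat \<Rightarrow> ncpoly" where
  "var i = (\<lambda>w. if w = [i] then 1 else 0)"

definition nc_mult :: "ncpoly \<Rightarrow> ncpoly \<Rightarrow> ncpoly" where
  "nc_mult p q = (\<lambda>w. \<Sum>i\<le>length w. p (take i w) * q (drop i w))"

definition nc_bracket :: "ncpoly \<Rightarrow> ncpoly \<Rightarrow> ncpoly" where
  "nc_bracket u v = (\<lambda>w. nc_mult u v w - nc_mult v u w)"

fun lbracket :: "ncpoly list \<Rightarrow> ncpoly" where
  "lbracket [] = (\<lambda>w. 0)"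
| "lbracket (u # us) = foldl nc_bracket u us"

definition perm_word :: "nat \<Rightarrow> (nat \<Rightarrow> nat) \<Rightarrow> nat list" where
  "perm_word m \<sigma> = map \<sigma> [1..<m+1]"

definition SumT :: "nat \<Rightarrow> (nat \<Rightarrow> nat) set \<Rightarrow> ncpoly" where
  "SumT m T = (\<lambda>w. \<Sum>\<sigma>\<in>T. if w = perm_word m \<sigma> then 1 else 0)"

definition beta :: "nat \<Rightarrow> ncpoly \<Rightarrow> ncpoly" where
  "beta m p = (\<lambda>w. \<Sum>\<sigma> | \<sigma> permutes {1..m}.
      p (perm_word m \<sigma>) * lbracket (map var (perm_word m \<sigma>)) w)"

definition Sh1 :: "nat \<Rightarrow> nat \<Rightarrow> ((nat \<Rightarrow> nat) \<times> (nat \<Rightarrow> nat)) set" where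
  "Sh1 s t = {(\<alpha>, \<beta>). \<alpha> \<in> {1..s} \<rightarrow>\<^sub>E {1..s+t} \<and> \<beta> \<in> {1..t} \<rightarrow>\<^sub>E {1..s+t}
      \<and> strict_mono_on {1..s} \<alpha> \<and> strict_mono_on {1..t} \<beta>
      \<and> \<alpha> ` {1..s} \<inter> \<beta> ` {1..t} = {} \<and> \<alpha> 1 = 1}"

definition sigma_tilde :: "(nat \<Rightarrow> nat) \<Rightarrow> (nat \<Rightarrow> nat) \<Rightarrow> nat \<Rightarrow> nat \<Rightarrow> nat \<Rightarrow> nat \<Rightarrow> nat" where
  "sigma_tilde \<alpha> \<beta> p q i x =
     (if 1 \<le> x \<and> x \<le> p then x
      else if p < x \<and> x \<le> p + i then p + \<beta> (i + 1 - (x - p))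
      else if p + i < x \<and> x \<le> p + q then p + \<alpha> (x - p - i)
      else x)"

definition sigma_abpq :: "(nat \<Rightarrow> nat) \<Rightarrow> (nat \<Rightarrow> nat) \<Rightarrow> nat \<Rightarrow> nat \<Rightarrow> nat \<Rightarrow> nat \<Rightarrow> nat" where
  "sigma_abpq \<alpha> \<beta> p q i = sigma_tilde \<alpha> \<beta> p q i \<circ> ((Transposition.transpose (1::nat) 2) ^^ i)"

definition C_set :: "nat \<Rightarrow> nat \<Rightarrow> (nat \<Rightarrow> nat) set" where
  "C_set p q = {sigma_abpq \<alpha> \<beta> p q i | i \<alpha> \<beta>. i \<le> q - 1 \<and> (\<alpha>, \<beta>) \<in> Sh1 (q - i) i}"

definition Phi :: "nat \<Rightarrow> nat \<Rightarrow> nat \<Rightarrow> nat" where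
  "Phi k l x = (if 1 \<le> x \<and> x \<le> l then x + k else if l < x \<and> x \<le> k + l then x - l else x)"

end

theory Submission
  imports Defs
begin


lemma nc_mult_assoc: "nc_mult (nc_mult p q) r = nc_mult p (nc_mult q r)"
proof (rule ext)
  fix w :: "nat list"
  let ?n = "length w"
  have "nc_mult (nc_mult p q) r w = (\<Sum>i\<le>?n. \<Sum>j\<le>i. p (take j w) * q (take (i-j) (drop j w)) * r (drop i w))"
    unfolding nc_mult_def
    by (rule sum.cong[OF refl]) (simp add: sum_distrib_right min_def drop_take mult.assoc)
  also have "\<dots> = (\<Sum>(i,j)\<in>{(i,j). j\<le>i \<and> i\<le>?n}. p (take j w) * q (take (i-j) (drop j w)) * r (drop i w))"
    by (simp add: sum.Sigma atMost_def) (rule sum.cong, auto)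
  also have "\<dots> = (\<Sum>(j,t)\<in>{(j,t). j + t \<le> ?n}. p (take j w) * q (take t (drop j w)) * r (drop (j+t) w))"
    by (rule sum.reindex_bij_witness[where i="\<lambda>(j,t). (j+t,j)" and j="\<lambda>(i,j). (j,i-j)"]) auto
  also have "\<dots> = (\<Sum>j\<le>?n. \<Sum>t\<le>?n-j. p (take j w) * q (take t (drop j w)) * r (drop (j+t) w))"
    by (simp add: sum.Sigma atMost_def) (rule sum.cong, auto)
  also have "\<dots> = nc_mult p (nc_mult q r) w"
    unfolding nc_mult_def
    by (rule sum.cong[OF refl]) (simp add: sum_distrib_left mult.assoc add.commute)
  finally show "nc_mult (nc_mult p q) r w = nc_mult p (nc_mult q r) w" .
qed

definition ncsub :: "ncpoly \<Rightarrow> ncpoly \<Rightarrow> ncpoly" where "ncsub p q = (\<lambda>w. p w - q w)"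

lemma nc_mult_sub_left: "nc_mult (ncsub p q) r = ncsub (nc_mult p r) (nc_mult q r)"
  by (auto simp: nc_mult_def ncsub_def fun_eq_iff left_diff_distrib sum_subtractf)
lemma nc_mult_sub_right: "nc_mult r (ncsub p q) = ncsub (nc_mult r p) (nc_mult r q)"
  by (auto simp: nc_mult_def ncsub_def fun_eq_iff right_diff_distrib sum_subtractf)

lemma nc_bracket_alt: "nc_bracket u v = ncsub (nc_mult u v) (nc_mult v u)"
  by (simp add: nc_bracket_def ncsub_def)

lemma jacobi: "nc_bracket u (nc_bracket v w) = ncsub (nc_bracket (nc_bracket u v) w) (nc_bracket (nc_bracket u w) v)"
  unfolding nc_bracket_alt nc_mult_sub_left nc_mult_sub_right nc_mult_assoc
  by (auto simp: ncsub_def fun_eq_iff)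

lemma nc_mult_sum_left: "finite S \<Longrightarrow> nc_mult (\<lambda>w. \<Sum>b\<in>S. c b * f b w) r = (\<lambda>w. \<Sum>b\<in>S. c b * nc_mult (f b) r w)"
  by (auto simp: nc_mult_def fun_eq_iff sum_distrib_right sum_distrib_left mult.assoc intro: sum.swap)

lemma nc_mult_sum_right: "finite S \<Longrightarrow> nc_mult r (\<lambda>w. \<Sum>b\<in>S. c b * f b w) = (\<lambda>w. \<Sum>b\<in>S. c b * nc_mult r (f b) w)"
  by (auto simp: nc_mult_def fun_eq_iff sum_distrib_right sum_distrib_left mult.assoc mult.left_commute intro: sum.swap)

lemma nc_bracket_sum_left: "finite S \<Longrightarrow> nc_bracket (\<lambda>w. \<Sum>b\<in>S. c b * f b w) r = (\<lambda>w. \<Sum>b\<in>S. c b * nc_bracket (f b) r w)"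
  by (simp add: nc_bracket_def nc_mult_sum_left nc_mult_sum_right right_diff_distrib sum_subtractf)




definition Lb :: "ncpoly \<Rightarrow> nat list \<Rightarrow> ncpoly" where
  "Lb u zs = foldl nc_bracket u (map var zs)"

lemma Lb_snoc: "Lb u (zs @ [x]) = nc_bracket (Lb u zs) (var x)"
  by (simp add: Lb_def)
lemma Lb_Cons: "Lb u (x # zs) = Lb (nc_bracket u (var x)) zs"
  by (simp add: Lb_def)
lemma Lb_Nil: "Lb u [] = u" by (simp add: Lb_def)

lemma sl_snoc: "finite A \<Longrightarrow> \<forall>x\<in>A. x < a \<Longrightarrow> sorted_list_of_set (insert a A) = sorted_list_of_set A @ [a]"
  apply (subst sorted_list_of_set_insert_remove, simp)
  apply (subgoal_tac "A - {a} = A")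
   apply (auto intro!: sorted_insort_is_snoc simp: less_imp_le)
  done

definition Rk :: "ncpoly \<Rightarrow> nat \<Rightarrow> ncpoly" where
  "Rk u k = (\<lambda>w. \<Sum>B\<in>Pow {2..k}. (-1)^card B * Lb u (rev (sorted_list_of_set B) @ sorted_list_of_set ({1..k} - B)) w)"

lemma ident: "nc_bracket u (Lb (var 1) [2..<Suc n + 1]) = Rk u (Suc n)"
proof (induction n arbitrary: u)
  case 0
  have "{1..Suc 0} = {1::nat}" by auto
  then show ?case by (simp add: Rk_def Lb_Nil Lb_Cons)
next
  case (Suc n)
  define x where "x = Suc (Suc n)"
  have fin: "finite (Pow {2..Suc n})" by simp
  have "Lb (var 1) [2..<Suc (Suc n) + 1] = nc_bracket (Lb (var 1) [2..<Suc n + 1]) (var x)"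
    by (simp add: x_def Lb_snoc)
  hence "nc_bracket u (Lb (var 1) [2..<Suc (Suc n) + 1])
      = ncsub (nc_bracket (Rk u (Suc n)) (var x)) (Rk (nc_bracket u (var x)) (Suc n))"
    by (simp only: jacobi Suc.IH)
  also have "\<dots> = Rk u (Suc (Suc n))"
  proof -
    have P: "Pow {2..Suc (Suc n)} = Pow {2..Suc n} \<union> insert x ` Pow {2..Suc n}"
      unfolding x_def by (simp add: atLeastAtMostSuc_conv Pow_insert)
    have disj: "Pow {2..Suc n} \<inter> insert x ` Pow {2..Suc n} = {}" by (auto simp: x_def)
    have inj: "inj_on (insert x) (Pow {2..Suc n})"
    proof (rule inj_onI)
      fix B C assume "B \<in> Pow {2..Suc n}" "C \<in> Pow {2..Suc n}" "insert x B = insert x C"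
      moreover have "x \<notin> B" "x \<notin> C" using calculation by (auto simp: x_def)
      ultimately show "B = C" by (metis Diff_insert_absorb)
    qed
    have T1: "\<And>B. B \<in> Pow {2..Suc n} \<Longrightarrow> sorted_list_of_set ({1..Suc (Suc n)} - B)
        = sorted_list_of_set ({1..Suc n} - B) @ [x]"
    proof -
      fix B assume "B \<in> Pow {2..Suc n}"
      hence "{1..Suc (Suc n)} - B = insert x ({1..Suc n} - B)" by (auto simp: x_def)
      thus "?thesis B" by (simp only:) (rule sl_snoc, auto simp: x_def)
    qed
    have T2: "\<And>B. B \<in> Pow {2..Suc n} \<Longrightarrow> sorted_list_of_set (insert x B)
        = sorted_list_of_set B @ [x] \<and> {1..Suc (Suc n)} - insert x B = {1..Suc n} - B
        \<and> card (insert x B) = Suc (card B)"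
    proof -
      fix B assume B: "B \<in> Pow {2..Suc n}"
      hence fB: "finite B" by (auto intro: finite_subset)
      have "x \<notin> B" using B by (auto simp: x_def)
      have "sorted_list_of_set (insert x B) = sorted_list_of_set B @ [x]"
        by (rule sl_snoc) (use B fB in \<open>auto simp: x_def\<close>)
      thus "?thesis B" using B fB \<open>x \<notin> B\<close> by (auto simp: x_def)
    qed
    show ?thesis
      unfolding Rk_def P
      apply (subst sum.union_disjoint, simp, simp, rule disj)
      apply (subst sum.reindex[OF inj])
      apply (simp add: nc_bracket_sum_left fin ncsub_def fun_eq_iff)
      apply (subst diff_conv_add_uminus, subst sum_negf[symmetric])
      apply (intro allI, rule arg_cong2[where f="(+)"])
       apply (rule sum.cong, simp, simp add: T1[simplified] Lb_snoc[symmetric] del: append_assoc, simp)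
      apply (rule sum.cong, simp, simp add: T2[simplified] Lb_Cons)
      done
  qed
  finally show ?case .
qed




fun sw :: "nat list \<Rightarrow> nat list" where
  "sw (a # b # r) = b # a # r"
| "sw xs = xs"

definition swp :: "nat \<Rightarrow> nat list \<Rightarrow> nat list" where
  "swp i xs = (if even i then xs else sw xs)"

lemma set_sw[simp]: "set (sw xs) = set xs"
  by (cases xs rule: sw.cases) auto
lemma distinct_sw[simp]: "distinct (sw xs) = distinct xs"
  by (cases xs rule: sw.cases) auto
lemma length_sw[simp]: "length (sw xs) = length xs"
  by (cases xs rule: sw.cases) auto
lemma sw_append: "2 \<le> length xs \<Longrightarrow> sw (xs @ ys) = sw xs @ ys"
  by (cases xs rule: sw.cases) auto
lemma map_sw: "map f (sw xs) = sw (map f xs)"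
  by (cases xs rule: sw.cases) auto

lemma transpose_pow: "(Transposition.transpose (1::nat) 2 ^^ i) = (if even i then id else Transposition.transpose 1 2)"
  by (induction i) simp_all

lemma map_transpose_upt: "2 \<le> m \<Longrightarrow> map (Transposition.transpose (1::nat) 2) [1..<m+1] = sw [1..<m+1]"
proof -
  assume "2 \<le> m"
  hence "[1..<m+1] = 1 # 2 # [3..<m+1]" by (simp add: upt_conv_Cons eval_nat_numeral)
  moreover have "map (Transposition.transpose (1::nat) 2) [3..<m+1] = [3..<m+1]"
    by (rule map_idI) (auto simp: Transposition.transpose_def)
  ultimately show ?thesis by simp
qed

lemma foldl_neg: "foldl nc_bracket (\<lambda>w. - f w) r = (\<lambda>w. - foldl nc_bracket f r w)"
proof (induction r arbitrary: f)
  case Nil then show ?case by simp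
next
  case (Cons a r)
  have "nc_bracket (\<lambda>w. - f w) a = (\<lambda>w. - nc_bracket f a w)"
    by (simp add: nc_bracket_def nc_mult_def fun_eq_iff sum_negf)
  then show ?case using Cons by simp
qed

lemma lb_sw: "2 \<le> length ws \<Longrightarrow> lbracket (map var (sw ws)) = (\<lambda>w. - lbracket (map var ws) w)"
proof (cases ws rule: sw.cases)
  case (1 a b r)
  have "nc_bracket (var b) (var a) = (\<lambda>w. - nc_bracket (var a) (var b) w)"
    by (simp add: nc_bracket_def fun_eq_iff)
  then show ?thesis using 1 by (simp add: foldl_neg)
qed auto

lemma lb_swp: "2 \<le> length ws \<Longrightarrow> lbracket (map var (swp i ws)) = (\<lambda>w. (-1)^i * lbracket (map var ws) w)"
  by (simp add: swp_def lb_sw)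

lemma sl_strict_mono: "strict_mono_on {1..n} f \<Longrightarrow> sorted_list_of_set (f ` {1..n}) = map f [1..<n+1]"
proof (induction n)
  case 0 then show ?case by simp
next
  case (Suc n)
  have sm: "strict_mono_on {1..n} f" using Suc.prems by (auto simp: strict_mono_on_def)
  have e: "{1..Suc n} = insert (Suc n) {1..n}" by auto
  have "\<forall>x\<in>f ` {1..n}. x < f (Suc n)"
    using Suc.prems by (auto simp: strict_mono_on_def)
  hence "sorted_list_of_set (f ` {1..Suc n}) = sorted_list_of_set (f ` {1..n}) @ [f (Suc n)]"
    unfolding e image_insert by (intro sl_snoc) auto
  then show ?case using Suc.IH[OF sm] by simp
qed

lemma perm_word_inj:
  assumes "\<sigma> permutes {1..m}" "\<tau> permutes {1..m}" "perm_word m \<sigma> = perm_word m \<tau>"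
  shows "\<sigma> = \<tau>"
proof (rule ext)
  fix x
  show "\<sigma> x = \<tau> x"
  proof (cases "x \<in> {1..m}")
    case True
    hence "x \<in> set [1..<m+1]" by auto
    then show ?thesis using assms(3) unfolding perm_word_def by (metis map_eq_conv)
  next
    case False
    then show ?thesis using assms(1,2) by (simp add: permutes_not_in)
  qed
qed

lemma beta_SumT:
  assumes "T \<subseteq> {\<sigma>. \<sigma> permutes {1..m}}"
  shows "beta m (SumT m T) = (\<lambda>w. \<Sum>\<sigma>\<in>T. lbracket (map var (perm_word m \<sigma>)) w)"
proof (rule ext)
  fix w
  let ?P = "{\<sigma>. \<sigma> permutes {1..m}}"
  have finP: "finite ?P" by (rule finite_permutations) simp
  have finT: "finite T" using assms finP by (rule finite_subset)
  have S: "SumT m T (perm_word m \<sigma>) = (if \<sigma> \<in> T then 1 else 0)" if "\<sigma> \<in> ?P" for \<sigma>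
  proof -
    have "SumT m T (perm_word m \<sigma>) = (\<Sum>\<tau>\<in>T. if \<sigma> = \<tau> then 1 else 0)"
      unfolding SumT_def
    proof (rule sum.cong[OF refl])
      fix \<tau> assume "\<tau> \<in> T"
      hence "\<tau> permutes {1..m}" using assms by blast
      thus "(if perm_word m \<sigma> = perm_word m \<tau> then 1 else 0) = (if \<sigma> = \<tau> then 1 else (0::int))"
        using perm_word_inj[of \<sigma> m \<tau>] that by auto
    qed
    also have "\<dots> = (if \<sigma> \<in> T then 1 else 0)" using finT by simp
    finally show ?thesis .
  qed
  have "beta m (SumT m T) w = (\<Sum>\<sigma>\<in>?P. (if \<sigma> \<in> T then lbracket (map var (perm_word m \<sigma>)) w else 0))"
    unfolding beta_def by (rule sum.cong) (auto simp: S)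
  also have "\<dots> = (\<Sum>\<sigma>\<in>T. lbracket (map var (perm_word m \<sigma>)) w)"
    using finP assms by (simp add: sum.If_cases Int_absorb1)
  finally show "beta m (SumT m T) w = (\<Sum>\<sigma>\<in>T. lbracket (map var (perm_word m \<sigma>)) w)" .
qed




declare upt_Suc[simp del]

definition Ys :: "nat \<Rightarrow> nat \<Rightarrow> nat list" where "Ys k l = [k+1..<k+l+1]"

definition wordB :: "nat \<Rightarrow> nat \<Rightarrow> nat set \<Rightarrow> nat list" where
  "wordB k l B = swp (card B) (Ys k l @ rev (sorted_list_of_set B) @ sorted_list_of_set ({1..k} - B))"

lemma upt_split3: "a \<le> b \<Longrightarrow> b \<le> c \<Longrightarrow> [a..<c] = [a..<b] @ [b..<c]"
  by (metis le_add_diff_inverse upt_add_eq_append)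

lemma map_swp: "map f (swp i xs) = swp i (map f xs)"
  by (simp add: swp_def map_sw)

lemma main_comp:
  assumes k: "k \<ge> 1" and l: "l \<ge> 1" and i: "i \<le> k - 1" and ab: "(\<alpha>, \<beta>) \<in> Sh1 (k - i) i"
  shows "\<beta> ` {1..i} \<subseteq> {2..k} \<and> card (\<beta> ` {1..i}) = i
    \<and> perm_word (k+l) (Phi k l \<circ> sigma_abpq \<alpha> \<beta> l k i) = wordB k l (\<beta> ` {1..i})"
proof -
  define s where "s = k - i"
  have s1: "s \<ge> 1" and sk: "s + i = k" using k i by (auto simp: s_def)
  have af: "\<alpha> \<in> {1..s} \<rightarrow>\<^sub>E {1..k}" and bf: "\<beta> \<in> {1..i} \<rightarrow>\<^sub>E {1..k}"
    and am: "strict_mono_on {1..s} \<alpha>" and bm: "strict_mono_on {1..i} \<beta>"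
    and dj: "\<alpha> ` {1..s} \<inter> \<beta> ` {1..i} = {}" and a1: "\<alpha> 1 = 1"
    using ab sk by (auto simp: Sh1_def s_def)
  define B where "B = \<beta> ` {1..i}"
  have ia: "inj_on \<alpha> {1..s}" using am by (rule strict_mono_on_imp_inj_on)
  have ib: "inj_on \<beta> {1..i}" using bm by (rule strict_mono_on_imp_inj_on)
  have ca: "card (\<alpha> ` {1..s}) = s" using ia by (simp add: card_image)
  have cb: "card B = i" using ib by (simp add: card_image B_def)
  have sub: "\<alpha> ` {1..s} \<union> B \<subseteq> {1..k}" using af bf by (auto simp: B_def)
  have "card (\<alpha> ` {1..s} \<union> B) = k" using ca cb dj sk
    by (subst card_Un_disjoint) (auto simp: B_def)
  hence un: "\<alpha> ` {1..s} \<union> B = {1..k}" using sub by (intro card_subset_eq) auto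
  have aimg: "\<alpha> ` {1..s} = {1..k} - B" using un dj by (auto simp: B_def)
  have "1 \<in> \<alpha> ` {1..s}" using a1 s1 by force
  hence Bsub: "B \<subseteq> {2..k}" using dj sub by (force simp: B_def)
  have mb: "map \<beta> [1..<i+1] = sorted_list_of_set B"
    unfolding B_def by (rule sl_strict_mono[symmetric]) (rule bm)
  have ma: "map \<alpha> [1..<s+1] = sorted_list_of_set ({1..k} - B)"
    unfolding aimg[symmetric] by (rule sl_strict_mono[symmetric]) (rule am)
  let ?F = "Phi k l \<circ> sigma_tilde \<alpha> \<beta> l k i"
  have P1: "map ?F [1..<l+1] = Ys k l"
    unfolding Ys_def by (rule nth_equalityI) (auto simp: sigma_tilde_def Phi_def)
  have P2: "map ?F [l+1..<l+i+1] = rev (map \<beta> [1..<i+1])"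
  proof (rule nth_equalityI)
    fix j assume "j < length (map ?F [l+1..<l+i+1])"
    hence j: "j < i" by simp
    have "\<beta> (i - j) \<in> {1..k}" using bf j by auto
    moreover have "Suc (i - Suc j) = i - j" using j by simp
    ultimately show "map ?F [l+1..<l+i+1] ! j = rev (map \<beta> [1..<i+1]) ! j"
      using j by (simp add: sigma_tilde_def Phi_def rev_nth)
  qed simp
  have P3: "map ?F [l+i+1..<l+k+1] = map \<alpha> [1..<s+1]"
  proof (rule nth_equalityI)
    fix j assume "j < length (map ?F [l+i+1..<l+k+1])"
    hence j: "j < s" using sk by simp
    have "\<alpha> (Suc j) \<in> {1..k}" using af j by auto
    then show "map ?F [l+i+1..<l+k+1] ! j = map \<alpha> [1..<s+1] ! j"
      using j sk by (simp add: sigma_tilde_def Phi_def)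
  qed (use sk in simp)
  have U: "[1..<k+l+1] = [1..<l+1] @ [l+1..<l+i+1] @ [l+i+1..<l+k+1]"
    using sk upt_split3[of 1 "l+1" "k+l+1"] upt_split3[of "l+1" "l+i+1" "l+k+1"]
    by (simp add: add.commute)
  have M: "map ?F [1..<k+l+1] = Ys k l @ rev (sorted_list_of_set B) @ sorted_list_of_set ({1..k} - B)"
    unfolding U by (simp only: map_append P1 P2 P3 mb ma)
  have T: "map (Transposition.transpose (1::nat) 2 ^^ i) [1..<k+l+1] = swp i [1..<k+l+1]"
    unfolding transpose_pow swp_def using k l map_transpose_upt[of "k+l"] by simp
  have "perm_word (k+l) (Phi k l \<circ> sigma_abpq \<alpha> \<beta> l k i) = map ?F (map (Transposition.transpose (1::nat) 2 ^^ i) [1..<k+l+1])"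
    by (simp add: perm_word_def sigma_abpq_def comp_assoc)
  also have "\<dots> = wordB k l B" unfolding T map_swp M wordB_def cb ..
  finally show ?thesis using Bsub cb by (simp add: B_def)
qed



lemma set_wordB:
  assumes "B \<subseteq> {2..k}"
  shows "set (wordB k l B) = {1..k+l} \<and> distinct (wordB k l B) \<and> length (wordB k l B) = k + l"
proof -
  have fB: "finite B" using assms by (rule finite_subset) simp
  have c: "card ({1..k} - B) = k - card B" using assms fB by (subst card_Diff_subset) auto
  have "B \<subseteq> {1..k}" using assms by auto
  hence cb: "card B \<le> k" using card_mono[of "{1..k}" B] by simp
  have s: "set (Ys k l @ rev (sorted_list_of_set B) @ sorted_list_of_set ({1..k} - B)) = {1..k+l}"
    using assms fB by (auto simp: Ys_def)
  have d: "distinct (Ys k l @ rev (sorted_list_of_set B) @ sorted_list_of_set ({1..k} - B))"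
    using assms fB by (auto simp: Ys_def)
  have ln: "length (Ys k l @ rev (sorted_list_of_set B) @ sorted_list_of_set ({1..k} - B)) = k + l"
    using fB c cb by (simp add: Ys_def)
  show ?thesis using s d ln by (simp add: wordB_def swp_def)
qed
lemma fix_out:
  assumes "x \<notin> {1..k+l}" "k \<ge> 1" "l \<ge> 1" "i \<le> k"
  shows "(Phi k l \<circ> sigma_abpq \<alpha> \<beta> l k i) x = x"
proof -
  have "x = 0 \<or> x > k + l" using assms by auto
  hence "x \<noteq> 1" "x \<noteq> 2" using assms by auto
  hence "(Transposition.transpose (1::nat) 2 ^^ i) x = x" unfolding transpose_pow by simp
  moreover have "sigma_tilde \<alpha> \<beta> l k i x = x" using \<open>x = 0 \<or> x > k + l\<close> assms(4)
    by (auto simp: sigma_tilde_def)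
  moreover have "Phi k l x = x" using \<open>x = 0 \<or> x > k + l\<close> by (auto simp: Phi_def)
  ultimately show ?thesis by (simp add: sigma_abpq_def)
qed

lemma permutes_from_word:
  assumes "\<And>x. x \<notin> {1..m} \<Longrightarrow> \<sigma> x = x" "distinct (perm_word m \<sigma>)" "set (perm_word m \<sigma>) = {1..m}"
  shows "\<sigma> permutes {1..m}"
proof (rule bij_imp_permutes)
  have e: "set [1..<m+1] = {1..m}" by auto
  show "bij_betw \<sigma> {1..m} {1..m}"
    using assms(2,3) unfolding bij_betw_def perm_word_def distinct_map e by (simp add: atLeastLessThanSuc_atLeastAtMost)
qed (use assms(1) in auto)



lemma nth_img: "(\<lambda>j. xs ! (j - 1)) ` {1..length xs} = set xs"
proof
  show "(\<lambda>j. xs ! (j - 1)) ` {1..length xs} \<subseteq> set xs" by auto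
  show "set xs \<subseteq> (\<lambda>j. xs ! (j - 1)) ` {1..length xs}"
  proof
    fix y assume "y \<in> set xs"
    then obtain t where "t < length xs" "xs ! t = y" by (auto simp: in_set_conv_nth)
    thus "y \<in> (\<lambda>j. xs ! (j - 1)) ` {1..length xs}" by (intro image_eqI[where x="Suc t"]) auto
  qed
qed

lemma nth_mono: "sorted_wrt (<) xs \<Longrightarrow> strict_mono_on {1..length xs} (restrict (\<lambda>j. xs ! (j - 1)) {1..length xs})"
  unfolding strict_mono_on_def by (auto intro: sorted_wrt_nth_less)

lemma nth_img_r: "restrict (\<lambda>j. xs ! (j - 1)) {1..length xs} ` {1..length xs} = set xs"
  using nth_img[of xs] by simp

lemma surj_B:
  assumes B: "B \<subseteq> {2..k}" and k: "k \<ge> 1"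
  shows "\<exists>\<alpha> \<beta>. card B \<le> k - 1 \<and> (\<alpha>, \<beta>) \<in> Sh1 (k - card B) (card B) \<and> \<beta> ` {1..card B} = B"
proof -
  define C where "C = {1..k} - B"
  have fB: "finite B" using B by (rule finite_subset) simp
  have cC: "card C = k - card B" unfolding C_def using B by (subst card_Diff_subset) (auto intro: finite_subset)
  have cB: "card B \<le> k - 1" using B by (metis card_atLeastAtMost card_mono finite_atLeastAtMost diff_Suc_1 Suc_1 diff_Suc_eq_diff_pred)
  have "1 \<in> C" using B k by (auto simp: C_def)
  have fC: "finite C" by (simp add: C_def)
  have minC: "Min C = 1" using \<open>1 \<in> C\<close> fC by (intro Min_eqI) (auto simp: C_def)
  have hdC: "sorted_list_of_set C ! 0 = 1"
    using sorted_list_of_set_nonempty[OF fC] \<open>1 \<in> C\<close> minC by (metis empty_iff nth_Cons_0)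
  define xB where "xB = sorted_list_of_set B"
  define xC where "xC = sorted_list_of_set C"
  have lB: "length xB = card B" by (simp add: xB_def)
  have lC: "length xC = k - card B" by (simp add: xC_def cC)
  define \<beta> where "\<beta> = restrict (\<lambda>j. xB ! (j - 1)) {1..card B}"
  define \<alpha> where "\<alpha> = restrict (\<lambda>j. xC ! (j - 1)) {1..k - card B}"
  have ib: "\<beta> ` {1..card B} = B" using nth_img_r[of xB] fB by (simp add: \<beta>_def lB xB_def)
  have ia: "\<alpha> ` {1..k - card B} = C" using nth_img_r[of xC] fC by (simp add: \<alpha>_def lC xC_def cC)
  have mb: "strict_mono_on {1..card B} \<beta>" using nth_mono[of xB] by (simp add: \<beta>_def lB xB_def)
  have ma: "strict_mono_on {1..k - card B} \<alpha>" using nth_mono[of xC] by (simp add: \<alpha>_def lC xC_def cC)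
  have e: "k - card B + card B = k" using cB k by simp
  have kb: "1 \<le> k - card B" using cB k by simp
  have "(\<alpha>, \<beta>) \<in> Sh1 (k - card B) (card B)"
    unfolding Sh1_def e
  proof (intro CollectI case_prodI conjI)
    show "\<alpha> \<in> {1..k - card B} \<rightarrow>\<^sub>E {1..k}" unfolding \<alpha>_def using ia by (auto simp: restrict_PiE_iff C_def \<alpha>_def)
    have bk: "\<beta> x \<in> {1..k}" if "x \<in> {1..card B}" for x
    proof -
      have "\<beta> x \<in> B" using ib that by blast
      thus ?thesis using B by auto
    qed
    show "\<beta> \<in> {1..card B} \<rightarrow>\<^sub>E {1..k}" using bk by (simp add: \<beta>_def restrict_PiE_iff)
    show "\<alpha> ` {1..k - card B} \<inter> \<beta> ` {1..card B} = {}" using ia ib by (auto simp: C_def)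
    show "\<alpha> 1 = 1" using kb hdC by (simp add: \<alpha>_def xC_def)
  qed (use ma mb in auto)
  thus ?thesis using cB ib by blast
qed




lemma tw1: "(1::nat) \<notin> set xs \<Longrightarrow> takeWhile (\<lambda>x. x \<noteq> 1) (xs @ 1 # r) = xs"
  by (induct xs) auto
lemma tw2: "Suc 0 \<notin> set xs \<Longrightarrow> takeWhile (\<lambda>x. x \<noteq> Suc 0) (xs @ Suc 0 # r) = xs"
  by (induct xs) auto

definition recB :: "nat \<Rightarrow> nat list \<Rightarrow> nat set" where
  "recB k w = set (takeWhile (\<lambda>x. x \<noteq> 1) w) \<inter> {1..k}"

lemma recB_wordB:
  assumes B: "B \<subseteq> {2..k}" and k: "k \<ge> 1" and l: "l \<ge> 1"
  shows "recB k (wordB k l B) = B"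
proof -
  define C where "C = {1..k} - B"
  have fB: "finite B" using B by (rule finite_subset) simp
  have "1 \<in> C" using B k by (auto simp: C_def)
  have fC: "finite C" by (simp add: C_def)
  have minC: "Min C = 1" using \<open>1 \<in> C\<close> fC by (intro Min_eqI) (auto simp: C_def)
  have sC: "sorted_list_of_set C = 1 # sorted_list_of_set (C - {1})"
    using sorted_list_of_set_nonempty[OF fC] \<open>1 \<in> C\<close> minC by (metis empty_iff)
  define pre where "pre = Ys k l @ rev (sorted_list_of_set B)"
  have n1: "1 \<notin> set pre" using B fB k by (auto simp: pre_def Ys_def)
  have sp: "set pre \<inter> {1..k} = B" using B fB by (auto simp: pre_def Ys_def)
  have w: "wordB k l B = swp (card B) (pre @ 1 # sorted_list_of_set (C - {1}))"
    using sC unfolding wordB_def pre_def C_def by simp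
  show ?thesis
  proof (cases "even (card B)")
    case True
    then show ?thesis using n1 sp unfolding w recB_def swp_def
      by (simp add: tw1 tw2)
  next
    case False
    hence "B \<noteq> {}" by auto
    hence "card B \<ge> 1" using fB by (simp add: Suc_leI card_gt_0_iff)
    hence "2 \<le> length pre" using l fB by (simp add: pre_def Ys_def)
    then show ?thesis using n1 sp False unfolding w recB_def swp_def
      by (simp add: sw_append tw1 tw2)
  qed
qed





theorem corollary1:
  fixes k l :: nat
  assumes "k \<ge> 1" and "l \<ge> 1"
  shows "nc_bracket (lbracket (map var [k+1..<k+l+1])) (lbracket (map var [1..<k+1]))
       = beta (k + l) (SumT (k + l) ((\<lambda>\<tau>. Phi k l \<circ> \<tau>) ` C_set l k))"
proof -
  obtain n where kn: "k = Suc n" using assms(1) by (cases k) auto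
  define Y where "Y = lbracket (map var (Ys k l))"
  have L1: "lbracket (map var [1..<k+1]) = Lb (var 1) [2..<k+1]"
    using assms(1) by (simp add: upt_conv_Cons Lb_def numeral_2_eq_2)
  have LHS: "nc_bracket (lbracket (map var [k+1..<k+l+1])) (lbracket (map var [1..<k+1])) = Rk Y k"
    using ident[of Y n] kn L1 by (simp add: Y_def Ys_def)
  have Ycons: "Ys k l = (k+1) # [k+2..<k+l+1]" using assms(2) by (simp add: Ys_def upt_conv_Cons)
  have Ylb: "lbracket (map var (Ys k l @ z)) = Lb Y z" for z
    unfolding Y_def Ycons by (simp add: Lb_def)
  have WB: "lbracket (map var (wordB k l B)) = (\<lambda>w. (-1)^card B * Lb Y (rev (sorted_list_of_set B) @ sorted_list_of_set ({1..k} - B)) w)"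
    if B: "B \<subseteq> {2..k}" for B
  proof -
    have "length (wordB k l B) = k + l" using set_wordB[OF B] by simp
    hence "2 \<le> length (Ys k l @ rev (sorted_list_of_set B) @ sorted_list_of_set ({1..k} - B))"
      using assms by (simp add: wordB_def swp_def split: if_splits)
    thus ?thesis unfolding wordB_def by (simp only: lb_swp Ylb)
  qed
  have LHS2: "Rk Y k = (\<lambda>w. \<Sum>B\<in>Pow {2..k}. lbracket (map var (wordB k l B)) w)"
    unfolding Rk_def by (rule ext, rule sum.cong) (auto simp: WB)
  define T where "T = (\<lambda>\<tau>. Phi k l \<circ> \<tau>) ` C_set l k"
  have Tchar: "\<sigma> \<in> T \<longleftrightarrow> (\<exists>i \<alpha> \<beta>. \<sigma> = Phi k l \<circ> sigma_abpq \<alpha> \<beta> l k i \<and> i \<le> k - 1 \<and> (\<alpha>, \<beta>) \<in> Sh1 (k - i) i)" for \<sigma>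
    by (auto simp: T_def C_set_def)
  have Tperm: "T \<subseteq> {\<sigma>. \<sigma> permutes {1..k+l}}"
  proof
    fix \<sigma> assume "\<sigma> \<in> T"
    then obtain i \<alpha> \<beta> where s: "\<sigma> = Phi k l \<circ> sigma_abpq \<alpha> \<beta> l k i" and i: "i \<le> k - 1"
      and ab: "(\<alpha>, \<beta>) \<in> Sh1 (k - i) i" using Tchar by blast
    have mc: "\<beta> ` {1..i} \<subseteq> {2..k}" "perm_word (k+l) \<sigma> = wordB k l (\<beta> ` {1..i})"
      using main_comp[OF assms i ab] s by auto
    have "\<sigma> permutes {1..k+l}"
    proof (rule permutes_from_word)
      show "\<And>x. x \<notin> {1..k + l} \<Longrightarrow> \<sigma> x = x" unfolding s using fix_out assms i by auto
    qed (use mc set_wordB[OF mc(1)] in auto)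
    thus "\<sigma> \<in> {\<sigma>. \<sigma> permutes {1..k+l}}" by simp
  qed
  have img: "perm_word (k+l) ` T = wordB k l ` Pow {2..k}"
  proof
    show "perm_word (k+l) ` T \<subseteq> wordB k l ` Pow {2..k}"
    proof
      fix ws assume "ws \<in> perm_word (k+l) ` T"
      then obtain \<sigma> where "\<sigma> \<in> T" "ws = perm_word (k+l) \<sigma>" by blast
      then obtain i \<alpha> \<beta> where s: "\<sigma> = Phi k l \<circ> sigma_abpq \<alpha> \<beta> l k i" and i: "i \<le> k - 1"
        and ab: "(\<alpha>, \<beta>) \<in> Sh1 (k - i) i" and ws: "ws = perm_word (k+l) \<sigma>" using Tchar by blast
      have "\<beta> ` {1..i} \<subseteq> {2..k}" "perm_word (k+l) \<sigma> = wordB k l (\<beta> ` {1..i})"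
        using main_comp[OF assms i ab] s by auto
      thus "ws \<in> wordB k l ` Pow {2..k}" using ws by blast
    qed
    show "wordB k l ` Pow {2..k} \<subseteq> perm_word (k+l) ` T"
    proof
      fix ws assume "ws \<in> wordB k l ` Pow {2..k}"
      then obtain B where B: "B \<subseteq> {2..k}" and ws: "ws = wordB k l B" by blast
      obtain \<alpha> \<beta> where c: "card B \<le> k - 1" and ab: "(\<alpha>, \<beta>) \<in> Sh1 (k - card B) (card B)"
        and bi: "\<beta> ` {1..card B} = B" using surj_B[OF B assms(1)] by blast
      define \<sigma> where "\<sigma> = Phi k l \<circ> sigma_abpq \<alpha> \<beta> l k (card B)"
      have "\<sigma> \<in> T" unfolding Tchar \<sigma>_def using c ab by blast
      moreover have "perm_word (k+l) \<sigma> = ws" using main_comp[OF assms c ab] bi ws \<sigma>_def by simp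
      ultimately show "ws \<in> perm_word (k+l) ` T" by blast
    qed
  qed
  have injpw: "inj_on (perm_word (k+l)) T"
    by (rule inj_onI) (use Tperm perm_word_inj in blast)
  have injw: "inj_on (wordB k l) (Pow {2..k})"
    by (rule inj_onI) (metis PowD recB_wordB assms)
  have RHS: "beta (k + l) (SumT (k + l) T) = (\<lambda>w. \<Sum>B\<in>Pow {2..k}. lbracket (map var (wordB k l B)) w)"
  proof (rule ext)
    fix w
    have "beta (k + l) (SumT (k + l) T) w = (\<Sum>\<sigma>\<in>T. lbracket (map var (perm_word (k+l) \<sigma>)) w)"
      using beta_SumT[OF Tperm] by simp
    also have "\<dots> = (\<Sum>ws\<in>perm_word (k+l) ` T. lbracket (map var ws) w)"
      by (rule sum.reindex[OF injpw, symmetric, unfolded comp_def])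
    also have "\<dots> = (\<Sum>ws\<in>wordB k l ` Pow {2..k}. lbracket (map var ws) w)" by (simp only: img)
    also have "\<dots> = (\<Sum>B\<in>Pow {2..k}. lbracket (map var (wordB k l B)) w)"
      by (rule sum.reindex[OF injw, unfolded comp_def])
    finally show "beta (k + l) (SumT (k + l) T) w = (\<Sum>B\<in>Pow {2..k}. lbracket (map var (wordB k l B)) w)" .
  qed
  show ?thesis using LHS LHS2 RHS by (simp add: T_def)
qed


end
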